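(* Suppose the access structure $\mathcal{A}\subseteq 2^P$ is connected and the polymatroid $\mathcal M=(f,sP)$ realizes $\mathcal{A}$. If $i\in P$ satisfies $f(i)=f(s)$, then $\mathcal M$ is tight at $i$, i.e. $f(sP)=f(sP\setminus\{i\})$.
   Context: A polymatroid $(f,M)$ consists of a finite set $M$ and a function $f$ on subsets of $M$ with $f(\emptyset)=0$ that is non-negative, monotone and submodular. It is tight at $i\in M$ if $f(M)=f(M\setminus\{i\})$. An access structure on a finite set $P$ is a non-empty upward-closed $\mathcal{A}\subseteq 2^P$ with $\emptyset\notin\mathcal{A}$. A participant $i$ is important if some $A\notin\mathcal{A}$ has $A\cup\{i\}\in\mathcal{A}$; $\mathcal{A}$ is connected if every participant is important. Let $s\notin P$; juxtaposition denotes union. A polymatroid $(f,sP)$ realizes $\mathcal{A}$ if for every $A\subseteq P$: $A\in\mathcal{A}$ iff $f(sA)=f(A)$, and $A\notin\mathcal{A}$ iff $f(sA)=f(A)+f(s)$. *)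

theory Defs
  imports Complex_Main
begin

definition polymatroid :: "('a set \<Rightarrow> real) \<Rightarrow> 'a set \<Rightarrow> bool" where
  "polymatroid f M \<longleftrightarrow> finite M \<and> f {} = 0 \<and>
     (\<forall>A. A \<subseteq> M \<longrightarrow> 0 \<le> f A) \<and>
     (\<forall>A B. A \<subseteq> B \<and> B \<subseteq> M \<longrightarrow> f A \<le> f B) \<and>
     (\<forall>A B. A \<subseteq> M \<and> B \<subseteq> M \<longrightarrow> f (A \<union> B) + f (A \<inter> B) \<le> f A + f B)"

definition tight_at :: "('a set \<Rightarrow> real) \<Rightarrow> 'a set \<Rightarrow> 'a \<Rightarrow> bool" where
  "tight_at f M i \<longleftrightarrow> f M = f (M - {i})"

definition access_structure :: "'a set \<Rightarrow> 'a set set \<Rightarrow> bool" where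
  "access_structure P Acc \<longleftrightarrow> finite P \<and> Acc \<subseteq> Pow P \<and> Acc \<noteq> {} \<and> {} \<notin> Acc \<and>
     (\<forall>A B. A \<in> Acc \<and> A \<subseteq> B \<and> B \<subseteq> P \<longrightarrow> B \<in> Acc)"

definition important :: "'a set \<Rightarrow> 'a set set \<Rightarrow> 'a \<Rightarrow> bool" where
  "important P Acc i \<longleftrightarrow> (\<exists>A. A \<subseteq> P \<and> A \<notin> Acc \<and> insert i A \<in> Acc)"

definition connected_access :: "'a set \<Rightarrow> 'a set set \<Rightarrow> bool" where
  "connected_access P Acc \<longleftrightarrow> (\<forall>i\<in>P. important P Acc i)"

definition realizes :: "('a set \<Rightarrow> real) \<Rightarrow> 'a \<Rightarrow> 'a set \<Rightarrow> 'a set set \<Rightarrow> bool" where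
  "realizes f s P Acc \<longleftrightarrow> (\<forall>A. A \<subseteq> P \<longrightarrow>
      (A \<in> Acc \<longleftrightarrow> f (insert s A) = f A) \<and>
      (A \<notin> Acc \<longleftrightarrow> f (insert s A) = f A + f {s}))"

end

theory Submission
  imports Defs
begin

theorem corollary2p3:
  fixes f :: "'a set \<Rightarrow> real" and s i :: 'a and P :: "'a set" and Acc :: "'a set set"
  assumes "s \<notin> P"
    and "access_structure P Acc"
    and "connected_access P Acc"
    and "polymatroid f (insert s P)"
    and "realizes f s P Acc"
    and "i \<in> P"
    and "f {i} = f {s}"
  shows "tight_at f (insert s P) i"
proof -
  obtain A where A: "A \<subseteq> P" "A \<notin> Acc" "insert i A \<in> Acc"
    using assms(3,6) unfolding connected_access_def important_def by blast
  have iA: "i \<notin> A" using A by (metis insert_absorb)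
  have iAP: "insert i A \<subseteq> P" using A assms(6) by blast
  have mono: "\<And>X Y. X \<subseteq> Y \<Longrightarrow> Y \<subseteq> insert s P \<Longrightarrow> f X \<le> f Y"
    and sub: "\<And>X Y. X \<subseteq> insert s P \<Longrightarrow> Y \<subseteq> insert s P \<Longrightarrow> f (X \<union> Y) + f (X \<inter> Y) \<le> f X + f Y"
    and f0: "f {} = 0"
    using assms(4) unfolding polymatroid_def by auto
  have r1: "f (insert s A) = f A + f {s}" using assms(5) A unfolding realizes_def by blast
  have r2: "f (insert s (insert i A)) = f (insert i A)" using assms(5) A iAP unfolding realizes_def by blast
  have s1: "f (A \<union> {i}) + f (A \<inter> {i}) \<le> f A + f {i}"
    using sub[of A "{i}"] A assms(6) by blast
  have "A \<inter> {i} = {}" using iA by blast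
  hence s1': "f (insert i A) \<le> f A + f {i}" using s1 f0 by simp
  define B where "B = P - {i}"
  have eqM: "insert s P - {i} = insert s B" using assms(1,6) B_def by blast
  have un: "insert s B \<union> insert s (insert i A) = insert s P" using A assms(6) B_def by blast
  have int: "insert s B \<inter> insert s (insert i A) = insert s A" using A iA B_def by blast
  have s2: "f (insert s P) + f (insert s A) \<le> f (insert s B) + f (insert s (insert i A))"
    using sub[of "insert s B" "insert s (insert i A)"] un int iAP B_def by auto
  have m: "f (insert s B) \<le> f (insert s P)" using mono[of "insert s B" "insert s P"] B_def by blast
  show ?thesis unfolding tight_at_def eqM using s1' s2 m r1 r2 assms(7) by linarith
qed

end
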